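(* Let $\lambda$ be an integer partition of length $k$ with $\lambda^{\perp B}\neq\emptyset$. Then $\lambda$ is novel if and only if the matrix $A^{(\lambda)}$ has rank $k-1$ and $\gcd(\lambda_1,\dots,\lambda_k)=1$.
   Context: An integer partition is $\lambda=(\lambda_1,\dots,\lambda_k)$ with integers $\lambda_1\ge\dots\ge\lambda_k\ge 1$; $k$ is its length. For $v\in\mathbb{Z}^k$ let $v^{\perp B}=\{x\in\{-1,1\}^k: v\cdot x=0\}$; for a partition, $\lambda^{\perp B}$ is this set for $(\lambda_1,\dots,\lambda_k)$. If $|\lambda^{\perp B}|=2p>0$, $A^{(\lambda)}$ is the $k\times p$ matrix whose columns are the elements of $\lambda^{\perp B}$ with first coordinate $+1$. $V_\lambda\subset\mathbb{Z}^k$ is the set of vectors obtained from $(\lambda_1,\dots,\lambda_k)$ by permuting coordinates and changing signs of some coordinates, with first coordinate positive. For $I\subset\{1,\dots,m\}$, $\mathrm{Proj}_I:\{-1,1\}^m\to\{-1,1\}^{|I|}$ keeps the coordinates indexed by $I$. Reduction: for partitions $\mu$ of length $m$ and $\lambda$ of length $k\le m$, $\mu\Rightarrow\lambda$ iff there exist $I\subset\{1,\dots,m\}$, $|I|=k$, and $v\in V_\lambda$ with $\mathrm{Proj}_I(\mu^{\perp B})\subset v^{\perp B}$. $\mu$ strictly reduces to $\lambda$ iff $\mu\Rightarrow\lambda$ and not $\lambda\Rightarrow\mu$. Partitions $\lambda,\mu$ of the same length are equivalent iff there is $w\in V_\mu$ with $\lambda^{\perp B}=w^{\perp B}$. A partition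 $\lambda$ is novel iff $\lambda^{\perp B}\neq\emptyset$, $\lambda$ strictly reduces to no partition, and $\lambda$ is lexicographically smallest among partitions equivalent to it. *)

theory Defs
  imports "Jordan_Normal_Form.DL_Rank"
begin

text \<open>Vectors in Z^k are integer lists of length k; coordinates are indexed 0..k-1.\<close>

definition is_partition :: "int list \<Rightarrow> bool" where
  "is_partition l \<longleftrightarrow> l \<noteq> [] \<and> sorted_wrt (\<ge>) l \<and> (\<forall>x\<in>set l. x \<ge> 1)"

definition dotp :: "int list \<Rightarrow> int list \<Rightarrow> int" where
  "dotp v x = (\<Sum>i<length v. v ! i * x ! i)"

definition perpB :: "int list \<Rightarrow> int list set" where
  "perpB v = {x. length x = length v \<and> set x \<subseteq> {-1, 1} \<and> dotp v x = 0}"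

definition Acols :: "int list \<Rightarrow> int list set" where
  "Acols l = {x \<in> perpB l. x ! 0 = 1}"

text \<open>The k x p matrix A^(lambda) (over the reals); the order of the columns is arbitrary
  (any enumeration without repetition), which does not affect the rank.\<close>
definition Amat :: "int list \<Rightarrow> real mat" where
  "Amat l = (let cs = (SOME cs. distinct cs \<and> set cs = Acols l)
             in mat (length l) (length cs) (\<lambda>(i, j). real_of_int (cs ! j ! i)))"

definition Vset :: "int list \<Rightarrow> int list set" where
  "Vset l = {v. length v = length l \<and>
     (\<exists>\<sigma> \<epsilon>. \<sigma> permutes {..<length l} \<and> (\<forall>i<length l. \<epsilon> i \<in> {-1, 1} \<and> v ! i = \<epsilon> i * l ! (\<sigma> i)))
     \<and> v ! 0 > 0}"

definition Proj :: "nat set \<Rightarrow> int list \<Rightarrow> int list" where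
  "Proj I x = nths x I"

definition reduces :: "int list \<Rightarrow> int list \<Rightarrow> bool" where
  "reduces mu la \<longleftrightarrow> length la \<le> length mu \<and>
     (\<exists>I v. I \<subseteq> {..<length mu} \<and> card I = length la \<and> v \<in> Vset la \<and>
        Proj I ` perpB mu \<subseteq> perpB v)"

definition strictly_reduces :: "int list \<Rightarrow> int list \<Rightarrow> bool" where
  "strictly_reduces mu la \<longleftrightarrow> reduces mu la \<and> \<not> reduces la mu"

definition equivalent :: "int list \<Rightarrow> int list \<Rightarrow> bool" where
  "equivalent la mu \<longleftrightarrow> length la = length mu \<and> (\<exists>w\<in>Vset mu. perpB la = perpB w)"

definition lex_le :: "int list \<Rightarrow> int list \<Rightarrow> bool" where
  "lex_le a b \<longleftrightarrow> a = b \<or> (\<exists>i<min (length a) (length b). take i a = take i b \<and> a ! i < b ! i)"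

definition novel :: "int list \<Rightarrow> bool" where
  "novel la \<longleftrightarrow> perpB la \<noteq> {} \<and>
     \<not> (\<exists>mu. is_partition mu \<and> strictly_reduces la mu) \<and>
     (\<forall>mu. is_partition mu \<and> equivalent mu la \<longrightarrow> lex_le la mu)"

end

theory Submission
  imports Defs
begin

lemma nths_restrict: "nths l I = nths l {t\<in>I. t < length l}"
  unfolding nths_def by (rule arg_cong[where f="map fst"], rule filter_cong) (auto simp: set_zip)

lemma nths_snoc: "length l = n \<Longrightarrow> nths (l @ [x]) I = nths l I @ (if n \<in> I then [x] else [])"
  by (simp add: nths_append nths_singleton)

lemma dotp_snoc: "length a = length b \<Longrightarrow> dotp (a@[x]) (b@[y]) = dotp a b + x*y"
  unfolding dotp_def by (simp add: nth_append)

lemma dotp_nths: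
  "length a = length b \<Longrightarrow> dotp (nths a I) (nths b I) = (\<Sum>t\<in>{t. t<length a \<and> t\<in>I}. a!t * b!t)"
proof (induction a arbitrary: b rule: rev_induct)
  case Nil then show ?case by (simp add: dotp_def)
next
  case (snoc x a)
  obtain b' y where b: "b = b' @ [y]" using snoc.prems by (cases b rule: rev_cases) auto
  have lb: "length b' = length a" using snoc.prems b by simp
  have ln: "length (nths a I) = length (nths b' I)" using lb by (simp add: length_nths)
  show ?case
  proof (cases "length a \<in> I")
    case True
    have e: "{t. t < length (a @ [x]) \<and> t \<in> I} = insert (length a) {t. t<length a \<and> t\<in>I}"
      using True by auto
    have "dotp (nths (a @ [x]) I) (nths b I) = dotp (nths a I) (nths b' I) + x*y"
      using True b lb ln by (simp add: nths_snoc dotp_snoc)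
    also have "\<dots> = (\<Sum>t\<in>{t. t<length a \<and> t\<in>I}. a!t * b'!t) + x*y" using snoc.IH lb by simp
    also have "\<dots> = (\<Sum>t\<in>{t. t < length (a @ [x]) \<and> t \<in> I}. (a@[x])!t * b!t)"
      unfolding e b by (simp add: nth_append lb add.commute)
    finally show ?thesis .
  next
    case False
    have e: "{t. t < length (a @ [x]) \<and> t \<in> I} = {t. t<length a \<and> t\<in>I}"
      using False by (auto simp: less_Suc_eq)
    have "dotp (nths (a @ [x]) I) (nths b I) = dotp (nths a I) (nths b' I)"
      using False b lb by (simp add: nths_snoc)
    also have "\<dots> = (\<Sum>t\<in>{t. t<length a \<and> t\<in>I}. a!t * b'!t)" using snoc.IH lb by simp
    also have "\<dots> = (\<Sum>t\<in>{t. t < length (a @ [x]) \<and> t \<in> I}. (a@[x])!t * b!t)"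
      unfolding e b by (intro sum.cong) (auto simp: nth_append lb)
    finally show ?thesis .
  qed
qed

lemma extend_list:
  "I \<subseteq> {..<n} \<Longrightarrow> length v = card I \<Longrightarrow>
   \<exists>u. length u = n \<and> nths u I = v \<and> (\<forall>t<n. t \<notin> I \<longrightarrow> u!t = 0)"
proof (induction n arbitrary: I v)
  case 0 then show ?case by auto
next
  case (Suc n)
  show ?case
  proof (cases "n \<in> I")
    case True
    let ?I = "I - {n}"
    have fin: "finite I" using Suc.prems(1) finite_subset by blast
    have sub: "?I \<subseteq> {..<n}" using Suc.prems(1) by (auto simp: less_Suc_eq)
    have cI: "card I = Suc (card ?I)" using True fin by (metis card_Suc_Diff1)
    then have "v \<noteq> []" using Suc.prems(2) by auto
    then obtain v' a where v: "v = v' @ [a]" by (cases v rule: rev_cases) auto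
    have "length v' = card ?I" using Suc.prems(2) v cI by simp
    from Suc.IH[OF sub this] obtain u where u: "length u = n" "nths u ?I = v'"
        "\<forall>t<n. t \<notin> ?I \<longrightarrow> u!t = 0" by blast
    have e: "{t\<in>I. t < length u} = {t\<in>?I. t < length u}" using u(1) by auto
    have "nths u I = nths u ?I"
      using nths_restrict[of u I] nths_restrict[of u ?I] e by simp
    then have "nths (u @ [a]) I = v" using u True v by (simp add: nths_snoc)
    moreover have "\<forall>t<Suc n. t \<notin> I \<longrightarrow> (u@[a])!t = 0"
      using u(1,3) True by (auto simp: nth_append less_Suc_eq)
    ultimately show ?thesis using u(1) by (intro exI[of _ "u@[a]"]) auto
  next
    case False
    have sub: "I \<subseteq> {..<n}" using Suc.prems(1) False by (auto simp: less_Suc_eq)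
    from Suc.IH[OF sub Suc.prems(2)] obtain u where u: "length u = n" "nths u I = v"
        "\<forall>t<n. t \<notin> I \<longrightarrow> u!t = 0" by blast
    have "nths (u @ [0]) I = v" using u False by (simp add: nths_snoc)
    moreover have "\<forall>t<Suc n. t \<notin> I \<longrightarrow> (u@[0])!t = 0"
      using u(1,3) by (auto simp: nth_append less_Suc_eq)
    ultimately show ?thesis using u(1) by (intro exI[of _ "u@[0]"]) auto
  qed
qed

lemma dotp_zero_outside:
  assumes "length u = n" "length x = n" "\<forall>t<n. t \<notin> I \<longrightarrow> u!t = 0"
  shows "dotp u x = dotp (nths u I) (nths x I)"
proof -
  have "dotp u x = (\<Sum>t<n. u!t * x!t)" using assms by (simp add: dotp_def)
  also have "\<dots> = (\<Sum>t\<in>{t. t<n \<and> t\<in>I}. u!t * x!t)"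
    by (rule sum.mono_neutral_right) (use assms in auto)
  also have "\<dots> = dotp (nths u I) (nths x I)" using dotp_nths[of u x I] assms by simp
  finally show ?thesis .
qed

lemma sorted_scale:
  fixes la mu :: "int list"
  assumes "sorted_wrt (\<ge>) la" "sorted_wrt (\<ge>) mu" "length mu = length la"
    "p permutes {..<length la}" "a > 0" "c > 0" "\<forall>t<length la. a * mu!(p t) = c * la!t"
  shows "\<forall>t<length la. a * mu!t = c * la!t"
proof -
  let ?A = "map ((*) a) mu" and ?B = "map ((*) c) la"
  have pA: "p permutes {..<length ?A}" using assms(3,4) by simp
  have "permute_list p ?A = ?B"
  proof (rule nth_equalityI)
    show "length (permute_list p ?A) = length ?B" using assms(3) by simp
    fix t assume "t < length (permute_list p ?A)"
    then have t: "t < length la" using assms(3) by simp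
    then have pt: "p t < length la" using permutes_in_image[OF assms(4)] by simp
    have "permute_list p ?A ! t = ?A ! p t" using permute_list_nth[OF pA] t assms(3) by simp
    also have "\<dots> = a * mu ! (p t)" using pt assms(3) by simp
    also have "\<dots> = ?B ! t" using assms(7) t by simp
    finally show "permute_list p ?A ! t = ?B ! t" .
  qed
  then have m: "mset ?A = mset ?B" using mset_permute_list[OF pA] by simp
  have sA: "sorted (rev ?A)" unfolding sorted_wrt_rev sorted_wrt_map
    by (rule sorted_wrt_mono_rel[OF _ assms(2)]) (use assms(5) in simp)
  have sB: "sorted (rev ?B)" unfolding sorted_wrt_rev sorted_wrt_map
    by (rule sorted_wrt_mono_rel[OF _ assms(1)]) (use assms(6) in simp)
  have s1: "sort (rev ?B) = rev ?A" by (rule properties_for_sort) (use m sA in auto)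
  have s2: "sort (rev ?B) = rev ?B" by (rule properties_for_sort) (use sB in auto)
  have "rev ?A = rev ?B" using s1 s2 by simp
  then have "?A = ?B" by simp
  show ?thesis
  proof (intro allI impI)
    fix t assume t: "t < length la"
    have "a * mu!t = ?A ! t" using t assms(3) by simp
    also have "\<dots> = ?B ! t" using \<open>?A = ?B\<close> by simp
    also have "\<dots> = c * la!t" using t by simp
    finally show "a * mu!t = c * la!t" .
  qed
qed



lemma part_pos: "is_partition la \<Longrightarrow> i < length la \<Longrightarrow> la!i \<ge> 1"
proof -
  assume "is_partition la" "i < length la"
  then have "\<forall>x\<in>set la. x \<ge> 1" "la!i \<in> set la" by (simp_all add: is_partition_def)
  then show ?thesis by simp
qed

lemma part_len: "is_partition la \<Longrightarrow> length la > 0"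
  unfolding is_partition_def by auto

lemma self_Vset: "is_partition la \<Longrightarrow> la \<in> Vset la"
proof -
  assume P: "is_partition la"
  have A: "id permutes {..<length la} \<and> (\<forall>i<length la. (\<lambda>_. 1::int) i \<in> {-1, 1} \<and> la ! i = (\<lambda>_. 1::int) i * la ! (id i))"
    by (simp add: permutes_id)
  have "\<exists>\<sigma> \<epsilon>. \<sigma> permutes {..<length la} \<and> (\<forall>i<length la. \<epsilon> i \<in> {-1, 1::int} \<and> la ! i = \<epsilon> i * la ! (\<sigma> i))"
    by (rule exI[of _ id], rule exI[of _ "\<lambda>_. 1::int"], rule A)
  moreover have "la!0 > 0" using part_pos[OF P, of 0] part_len[OF P] by simp
  ultimately show ?thesis unfolding Vset_def by simp
qed

lemma dotp_scale:
  assumes "length a = length b" "\<forall>i<length a. p * a!i = q * b!i"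
  shows "p * dotp a x = q * dotp b x"
proof -
  have "p * dotp a x = (\<Sum>i<length a. (p * a!i) * x!i)" unfolding dotp_def
    by (simp add: sum_distrib_left mult.assoc)
  also have "\<dots> = (\<Sum>i<length a. (q * b!i) * x!i)" using assms(2) by simp
  also have "\<dots> = q * dotp b x" unfolding dotp_def using assms(1)
    by (simp add: sum_distrib_left mult.assoc)
  finally show ?thesis .
qed

lemma gcd_part:
  assumes P: "is_partition la" and N: "novel la"
  shows "Gcd (set la) = 1"
proof (rule ccontr)
  assume ne: "Gcd (set la) \<noteq> 1"
  define g where "g = Gcd (set la)"
  have g0: "g \<ge> 0" unfolding g_def by simp
  have "g dvd la!0" unfolding g_def using part_len[OF P] by (simp add: Gcd_dvd)
  moreover have "la!0 \<ge> 1" using part_pos[OF P, of 0] part_len[OF P] by simp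
  ultimately have "g \<noteq> 0" by auto
  with g0 ne have g2: "g \<ge> 2" unfolding g_def by linarith
  have dv: "\<And>x. x \<in> set la \<Longrightarrow> g * (x div g) = x" unfolding g_def by (simp add: Gcd_dvd)
  define mu where "mu = map (\<lambda>x. x div g) la"
  have lm: "length mu = length la" unfolding mu_def by simp
  have mui: "\<And>i. i < length la \<Longrightarrow> la!i = g * mu!i" unfolding mu_def using dv nth_mem by (metis nth_map)
  have mupos: "\<And>i. i < length la \<Longrightarrow> mu!i \<ge> 1"
  proof -
    fix i assume i: "i < length la"
    have "la!i \<ge> 1" using part_pos[OF P i] .
    then have "g * mu!i > 0" using mui[OF i] by simp
    then show "mu!i \<ge> 1" using g2 by (simp add: zero_less_mult_iff)
  qed
  have Ps: "sorted_wrt (\<ge>) la" using P unfolding is_partition_def by simp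
  have pm: "is_partition mu"
    unfolding is_partition_def
  proof (intro conjI)
    show "mu \<noteq> []" using lm part_len[OF P] by auto
    show "sorted_wrt (\<ge>) mu" unfolding mu_def sorted_wrt_map
      by (rule sorted_wrt_mono_rel[OF _ Ps]) (use g2 in \<open>auto intro: zdiv_mono1\<close>)
    show "\<forall>x\<in>set mu. x \<ge> 1"
    proof
      fix x assume "x \<in> set mu"
      then obtain i where "i < length mu" "x = mu!i" by (auto simp: in_set_conv_nth)
      then show "x \<ge> 1" using mupos lm by simp
    qed
  qed
  have "perpB mu = perpB la"
  proof -
    have "\<And>x. g * dotp mu x = 1 * dotp la x" by (rule dotp_scale) (use lm mui in auto)
    then have e: "\<And>x. dotp la x = g * dotp mu x" by simp
    have "\<And>x. dotp mu x = 0 \<longleftrightarrow> dotp la x = 0" unfolding e using g2 by simp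
    then show ?thesis unfolding perpB_def using lm by auto
  qed
  then have "equivalent mu la" unfolding equivalent_def using lm self_Vset[OF P] by auto
  moreover have "\<forall>mu. is_partition mu \<and> equivalent mu la \<longrightarrow> lex_le la mu" using N unfolding novel_def by simp
  ultimately have "lex_le la mu" using pm by simp
  moreover have "mu!0 < la!0"
  proof -
    have a: "la!0 = g * mu!0" "mu!0 \<ge> 1" using mui[of 0] mupos[of 0] part_len[OF P] by auto
    have "g * mu!0 \<ge> 2 * mu!0" by (rule mult_right_mono) (use g2 a in auto)
    then show ?thesis using a by linarith
  qed
  ultimately show False unfolding lex_le_def
  proof (elim disjE exE conjE)
    assume "la = mu" "mu ! 0 < la ! 0" then show False by simp
  next
    fix i assume "i < min (length la) (length mu)" "take i la = take i mu" "la ! i < mu ! i"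
      "mu ! 0 < la ! 0"
    show False
    proof (cases "i = 0")
      case True then show False using \<open>la ! i < mu ! i\<close> \<open>mu ! 0 < la ! 0\<close> by simp
    next
      case False
      then have "take i la ! 0 = take i mu ! 0" using \<open>take i la = take i mu\<close> by simp
      then have "la!0 = mu!0" using False by simp
      then show False using \<open>mu ! 0 < la ! 0\<close> by simp
    qed
  qed
qed



definition bad :: "int list \<Rightarrow> int list \<Rightarrow> bool" where
  "bad la u \<longleftrightarrow> length u = length la \<and> (\<forall>x\<in>perpB la. dotp u x = 0) \<and>
     (\<exists>i<length la. \<exists>j<length la. u!i * la!j \<noteq> u!j * la!i)"

lemma dotp_lincomb:
  assumes "length u = length la"
  shows "dotp (map (\<lambda>t. a * u!t - b * la!t) [0..<length la]) x = a * dotp u x - b * dotp la x"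
  unfolding dotp_def using assms
  by (simp add: sum_subtractf sum_distrib_left algebra_simps)

lemma bad_reduces:
  assumes P: "is_partition la" and B: "bad la u"
  shows "\<exists>mu. is_partition mu \<and> strictly_reduces la mu"
proof -
  define k where "k = length la"
  have lu: "length u = k" and ort: "\<forall>x\<in>perpB la. dotp u x = 0" using B unfolding bad_def k_def by auto
  obtain i j where ij: "i < k" "j < k" "u!i * la!j \<noteq> u!j * la!i" using B unfolding bad_def k_def by auto
  define w where "w = map (\<lambda>t. la!j * u!t - u!j * la!t) [0..<k]"
  have lw: "length w = k" unfolding w_def by simp
  have wj: "w!j = 0" unfolding w_def using ij by simp
  have wi: "w!i \<noteq> 0" unfolding w_def using ij by (simp add: algebra_simps)
  have wort: "\<And>x. x \<in> perpB la \<Longrightarrow> dotp w x = 0"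
    using dotp_lincomb[of u la "la!j" "u!j"] lu ort unfolding w_def k_def by (simp add: perpB_def)
  define J where "J = {t. t < k \<and> w!t \<noteq> 0}"
  have Jsub: "J \<subseteq> {..<k}" unfolding J_def by auto
  have finJ: "finite J" using Jsub finite_subset by blast
  have iJ: "i \<in> J" unfolding J_def using ij wi by simp
  have cJ: "card J < k"
  proof -
    have "J \<subseteq> {..<k} - {j}" unfolding J_def using wj by auto
    then have "card J \<le> card ({..<k} - {j})" by (intro card_mono) auto
    also have "\<dots> = k - 1" using ij by simp
    finally show ?thesis using ij by linarith
  qed
  have cJ0: "card J > 0" using iJ finJ card_gt_0_iff by blast
  define wJ where "wJ = nths w J"
  have JJ: "{t. t < length w \<and> t \<in> J} = J" using lw unfolding J_def by auto
  have lwJ: "length wJ = card J" unfolding wJ_def length_nths JJ ..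
  have wJnz: "\<And>t. t < length wJ \<Longrightarrow> wJ!t \<noteq> 0"
  proof -
    fix t assume "t < length wJ"
    then have "wJ!t \<in> set wJ" by simp
    then obtain s where "s < length w" "s \<in> J" "wJ!t = w!s" unfolding wJ_def set_nths by auto
    then show "wJ!t \<noteq> 0" unfolding J_def by simp
  qed
  define s where "s = sgn (wJ!0)"
  have s: "s \<in> {-1, 1}" unfolding s_def using wJnz[of 0] cJ0 lwJ by (auto simp: sgn_if)
  define v where "v = map ((*) s) wJ"
  define mu where "mu = rev (sort (map abs wJ))"
  have lmu: "length mu = card J" unfolding mu_def using lwJ by simp
  have lv: "length v = card J" unfolding v_def using lwJ by simp
  have msetmu: "mset mu = mset (map abs wJ)" unfolding mu_def by simp
  have pm: "is_partition mu" unfolding is_partition_def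
  proof (intro conjI)
    show "mu \<noteq> []" using lmu cJ0 by auto
    show "sorted_wrt (\<ge>) mu" unfolding mu_def sorted_wrt_rev by simp
    show "\<forall>x\<in>set mu. x \<ge> 1"
    proof
      fix x assume "x \<in> set mu"
      then have "x \<in> set (map abs wJ)" unfolding mu_def by simp
      then obtain t where "t < length wJ" "x = abs (wJ!t)" by (auto simp: in_set_conv_nth)
      then show "x \<ge> 1" using wJnz by fastforce
    qed
  qed
  obtain p where p: "p permutes {..<length mu}" "permute_list p mu = map abs wJ"
    using mset_eq_permutation[OF msetmu[symmetric]] by blast
  have vV: "v \<in> Vset mu"
  proof -
    define \<epsilon> where "\<epsilon> = (\<lambda>t. s * sgn (wJ!t))"
    have "\<forall>t<length mu. \<epsilon> t \<in> {-1, 1} \<and> v ! t = \<epsilon> t * mu ! (p t)"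
    proof (intro allI impI)
      fix t assume t: "t < length mu"
      then have tw: "t < length wJ" using lmu lwJ by simp
      have e1: "abs (wJ!t) = mu ! (p t)"
      proof -
        have "permute_list p mu ! t = mu ! (p t)" using permute_list_nth[OF p(1) t] .
        then show ?thesis using p(2) tw by simp
      qed
      have "sgn (wJ!t) \<in> {-1, 1}" using wJnz[OF tw] by (auto simp: sgn_if)
      then have "\<epsilon> t \<in> {-1, 1}" unfolding \<epsilon>_def using s by auto
      moreover have "v ! t = \<epsilon> t * mu ! (p t)"
        unfolding v_def \<epsilon>_def e1[symmetric] using tw by (simp add: sgn_mult_abs mult.assoc)
      ultimately show "\<epsilon> t \<in> {-1, 1} \<and> v ! t = \<epsilon> t * mu ! (p t)" by simp
    qed
    note E = this
    have "\<exists>\<sigma> \<epsilon>. \<sigma> permutes {..<length mu} \<and> (\<forall>i<length mu. \<epsilon> i \<in> {-1, 1} \<and> v ! i = \<epsilon> i * mu ! (\<sigma> i))"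
      by (rule exI[of _ p], rule exI[of _ \<epsilon>]) (use p(1) E in simp)
    moreover have "v!0 > 0" unfolding v_def s_def using wJnz[of 0] cJ0 lwJ
      by (simp add: sgn_if)
    ultimately show ?thesis unfolding Vset_def using lv lmu by simp
  qed
  have red: "reduces la mu"
    unfolding reduces_def
  proof (intro conjI exI[of _ J] exI[of _ v])
    show "length mu \<le> length la" using lmu cJ k_def by simp
    show "J \<subseteq> {..<length la}" using Jsub k_def by simp
    show "card J = length mu" using lmu by simp
    show "v \<in> Vset mu" by (rule vV)
    show "Proj J ` perpB la \<subseteq> perpB v"
    proof
      fix y assume "y \<in> Proj J ` perpB la"
      then obtain x where x: "x \<in> perpB la" "y = nths x J" unfolding Proj_def by auto
      have lx: "length x = k" using x(1) unfolding perpB_def k_def by simp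
      have sx: "set x \<subseteq> {-1, 1}" using x(1) unfolding perpB_def by simp
      have ly: "length y = length v"
        using x(2) lv lx JJ lw by (simp add: length_nths)
      have sy: "set y \<subseteq> {-1, 1}" using x(2) sx set_nths_subset[of x J] by blast
      have zero_out: "\<forall>t<k. t \<notin> J \<longrightarrow> w!t = 0" unfolding J_def by auto
      have "dotp v y = s * dotp wJ y" unfolding dotp_def v_def using lwJ
        by (simp add: sum_distrib_left mult.assoc)
      also have "dotp wJ y = dotp w x"
        using dotp_zero_outside[OF lw lx zero_out] x(2) unfolding wJ_def by simp
      also have "dotp w x = 0" using wort[OF x(1)] .
      finally have "dotp v y = 0" by simp
      then show "y \<in> perpB v" unfolding perpB_def using ly sy by simp
    qed
  qed
  have "\<not> reduces mu la" unfolding reduces_def using lmu cJ k_def by simp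
  then show ?thesis using pm red unfolding strictly_reduces_def by blast
qed

lemma bad_not_novel: "is_partition la \<Longrightarrow> bad la u \<Longrightarrow> \<not> novel la"
  using bad_reduces unfolding novel_def by blast



lemma Vset_D:
  assumes "v \<in> Vset l"
  obtains \<sigma> \<epsilon> where "length v = length l" "\<sigma> permutes {..<length l}"
    "\<forall>i<length l. \<epsilon> i \<in> {-1, 1} \<and> v ! i = \<epsilon> i * l ! (\<sigma> i)" "v!0 > 0"
  using assms unfolding Vset_def by blast

lemma perpB_D: "x \<in> perpB l \<Longrightarrow> length x = length l \<and> set x \<subseteq> {-1,1} \<and> dotp l x = 0"
  unfolding perpB_def by simp

lemma no_strict_reduce:
  assumes P: "is_partition la"
    and G: "\<And>u. length u = length la \<Longrightarrow> (\<forall>x\<in>perpB la. dotp u x = 0) \<Longrightarrow>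
               (\<forall>i<length la. \<forall>j<length la. u!i * la!j = u!j * la!i)"
    and Pm: "is_partition mu"
  shows "\<not> strictly_reduces la mu"
proof
  assume "strictly_reduces la mu"
  then have R: "reduces la mu" and NR: "\<not> reduces mu la" unfolding strictly_reduces_def by auto
  define k where "k = length la"
  define m where "m = length mu"
  obtain I v where I: "I \<subseteq> {..<k}" "card I = m" "v \<in> Vset mu" "Proj I ` perpB la \<subseteq> perpB v"
    and mk: "m \<le> k"
    using R unfolding reduces_def k_def m_def by blast
  obtain \<sigma> \<epsilon> where V: "length v = m" "\<sigma> permutes {..<m}"
    "\<forall>i<m. \<epsilon> i \<in> {-1, 1} \<and> v ! i = \<epsilon> i * mu ! (\<sigma> i)" "v!0 > 0"
    using Vset_D[OF I(3)] unfolding m_def by metis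
  have m0: "m > 0" using part_len[OF Pm] unfolding m_def .
  obtain u where u: "length u = k" "nths u I = v" "\<forall>t<k. t \<notin> I \<longrightarrow> u!t = 0"
    using extend_list[OF I(1)] V(1) I(2) by metis
  have uort: "\<forall>x\<in>perpB la. dotp u x = 0"
  proof
    fix x assume x: "x \<in> perpB la"
    have lx: "length x = k" using perpB_D[OF x] k_def by simp
    have "Proj I x \<in> perpB v" using I(4) x by blast
    then have "dotp v (nths x I) = 0" unfolding Proj_def by (simp add: perpB_def)
    then show "dotp u x = 0" using dotp_zero_outside[OF u(1) lx u(3)] u(2) by simp
  qed
  have pr: "\<forall>i<k. \<forall>j<k. u!i * la!j = u!j * la!i" using G[OF u(1)[unfolded k_def] uort] k_def by simp
  show False
  proof (cases "m < k")
    case True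
    have "\<not> {..<k} \<subseteq> I"
    proof
      assume "{..<k} \<subseteq> I"
      then have "I = {..<k}" using I(1) by auto
      then show False using I(2) True by simp
    qed
    then obtain t where t: "t < k" "t \<notin> I" by auto
    have uz: "\<forall>a<k. u!a = 0"
    proof (intro allI impI)
      fix a assume a: "a < k"
      have "u!a * la!t = u!t * la!a" using pr a t by simp
      then have "u!a * la!t = 0" using u(3) t by simp
      moreover have "la!t \<ge> 1" using part_pos[OF P] t k_def by simp
      ultimately show "u!a = 0" by simp
    qed
    have "v!0 \<in> set (nths u I)" using u(2) V(1) m0 by simp
    then obtain s where "s < length u" "v!0 = u!s" unfolding set_nths by auto
    then show False using uz u(1) V(4) by simp
  next
    case False
    then have mk': "m = k" using mk by simp
    have fin: "finite {..<k}" by simp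
    have Ik: "I = {..<k}" using card_subset_eq[OF fin I(1)] I(2) mk' by simp
    have vu: "v = u" using u(2) u(1) unfolding Ik by (simp add: nths_upt_eq_take)
    have la0: "la!0 \<ge> 1" using part_pos[OF P, of 0] part_len[OF P] by simp
    have key: "\<forall>t<k. la!0 * mu!(\<sigma> t) = v!0 * la!t"
    proof (intro allI impI)
      fix t assume t: "t < k"
      have e: "v!t * la!0 = v!0 * la!t" using pr t part_len[OF P] vu k_def by simp
      have "la!t \<ge> 1" using part_pos[OF P] t k_def by simp
      then have "v!0 * la!t > 0" using V(4) by simp
      then have "v!t * la!0 > 0" using e by simp
      then have vt: "v!t > 0" using la0 by (simp add: zero_less_mult_iff)
      have st: "\<sigma> t < m" using permutes_in_image[OF V(2)] t mk' by simp
      have "mu!(\<sigma> t) \<ge> 1" using part_pos[OF Pm] st m_def by simp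
      moreover have "\<epsilon> t \<in> {-1, 1}" "v!t = \<epsilon> t * mu!(\<sigma> t)" using V(3) t mk' by auto
      ultimately have "v!t = mu!(\<sigma> t)" using vt by auto
      then show "la!0 * mu!(\<sigma> t) = v!0 * la!t" using e by (simp add: mult.commute)
    qed
    have Ps: "sorted_wrt (\<ge>) la" "sorted_wrt (\<ge>) mu" using P Pm unfolding is_partition_def by auto
    have sc: "\<forall>t<k. la!0 * mu!t = v!0 * la!t"
      using sorted_scale[OF Ps] mk' V(2) la0 V(4) key unfolding k_def m_def by simp
    have "reduces mu la" unfolding reduces_def
    proof (intro conjI exI[of _ "{..<k}"] exI[of _ la])
      show "length la \<le> length mu" using mk' k_def m_def by simp
      show "{..<k} \<subseteq> {..<length mu}" using mk' m_def by simp
      show "card {..<k} = length la" using k_def by simp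
      show "la \<in> Vset la" using self_Vset[OF P] .
      show "Proj {..<k} ` perpB mu \<subseteq> perpB la"
      proof
        fix y assume "y \<in> Proj {..<k} ` perpB mu"
        then obtain x where x: "x \<in> perpB mu" "y = nths x {..<k}" unfolding Proj_def by auto
        have lx: "length x = k" using perpB_D[OF x(1)] mk' m_def by simp
        then have yx: "y = x" using x(2) by (simp add: nths_upt_eq_take)
        have "la!0 * dotp mu x = v!0 * dotp la x"
          by (rule dotp_scale) (use sc mk' k_def m_def in auto)
        then have "dotp la x = 0" using perpB_D[OF x(1)] V(4) by simp
        then show "y \<in> perpB la" using yx perpB_D[OF x(1)] lx k_def unfolding perpB_def by simp
      qed
    qed
    then show False using NR by simp
  qed
qed



lemma lex_min:
  assumes P: "is_partition la"
    and G: "\<And>u. length u = length la \<Longrightarrow> (\<forall>x\<in>perpB la. dotp u x = 0) \<Longrightarrow>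
               (\<forall>i<length la. \<forall>j<length la. u!i * la!j = u!j * la!i)"
    and g1: "Gcd (set la) = 1"
    and Pm: "is_partition mu" and E: "equivalent mu la"
  shows "lex_le la mu"
proof -
  define k where "k = length la"
  obtain w where lmu: "length mu = k" and wV: "w \<in> Vset la" and pw: "perpB mu = perpB w"
    using E unfolding equivalent_def k_def by auto
  obtain \<sigma> \<epsilon> where V: "length w = k" "\<sigma> permutes {..<k}"
    "\<forall>i<k. \<epsilon> i \<in> {-1, 1} \<and> w ! i = \<epsilon> i * la ! (\<sigma> i)"
    using Vset_D[OF wV] unfolding k_def by metis
  define tt where "tt = Hilbert_Choice.inv \<sigma>"
  have tp: "tt permutes {..<k}" unfolding tt_def using permutes_inv[OF V(2)] .
  have st: "\<And>t. \<sigma> (tt t) = t" unfolding tt_def using permutes_inverses(1)[OF V(2)] by simp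
  have ts: "\<And>t. tt (\<sigma> t) = t" unfolding tt_def using permutes_inverses(2)[OF V(2)] by simp
  have sk: "\<And>i. i < k \<Longrightarrow> \<sigma> i < k" using permutes_in_image[OF V(2)] by simp
  have tk: "\<And>i. i < k \<Longrightarrow> tt i < k" using permutes_in_image[OF tp] by simp
  have eps: "\<And>i. i < k \<Longrightarrow> \<epsilon> i \<in> {-1, 1}" using V(3) by simp
  have eps2: "\<And>i. i < k \<Longrightarrow> \<epsilon> i * \<epsilon> i = 1"
  proof -
    fix i assume "i < k"
    then have "\<epsilon> i \<in> {-1,1}" by (rule eps)
    then show "\<epsilon> i * \<epsilon> i = 1" by auto
  qed
  define u where "u = map (\<lambda>t. mu!(tt t) * \<epsilon> (tt t)) [0..<k]"
  have lu: "length u = k" unfolding u_def by simp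
  have uort: "\<forall>y\<in>perpB la. dotp u y = 0"
  proof
    fix y assume y: "y \<in> perpB la"
    have ly: "length y = k" and sy: "set y \<subseteq> {-1,1}" and dy: "dotp la y = 0"
      using perpB_D[OF y] k_def by auto
    define x where "x = map (\<lambda>i. \<epsilon> i * y!(\<sigma> i)) [0..<k]"
    have lx: "length x = k" unfolding x_def by simp
    have sx: "set x \<subseteq> {-1,1}"
    proof
      fix z assume "z \<in> set x"
      then obtain i where i: "i < k" "z = \<epsilon> i * y!(\<sigma> i)" unfolding x_def by auto
      have "y!(\<sigma> i) \<in> set y" using sk[OF i(1)] ly by simp
      then have "y!(\<sigma> i) \<in> {-1,1}" using sy by blast
      then show "z \<in> {-1,1}" using eps[OF i(1)] i(2) by auto
    qed
    have "dotp w x = (\<Sum>i<k. \<epsilon> i * la!(\<sigma> i) * (\<epsilon> i * y!(\<sigma> i)))"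
      unfolding dotp_def x_def using V(1,3) by simp
    also have "\<dots> = (\<Sum>i<k. la!(\<sigma> i) * y!(\<sigma> i))"
    proof (rule sum.cong[OF refl])
      fix i assume "i \<in> {..<k}"
      then have "\<epsilon> i * \<epsilon> i = 1" using eps2 by simp
      then show "\<epsilon> i * la!(\<sigma> i) * (\<epsilon> i * y!(\<sigma> i)) = la!(\<sigma> i) * y!(\<sigma> i)"
        by (metis (no_types, lifting) mult.assoc mult.left_commute mult_1)
    qed
    also have "\<dots> = (\<Sum>t<k. la!t * y!t)"
      using sum.permute[OF V(2), of "\<lambda>t. la!t * y!t"] by (simp add: comp_def)
    also have "\<dots> = 0" using dy unfolding dotp_def k_def by simp
    finally have "x \<in> perpB w" unfolding perpB_def using lx sx V(1) by simp
    then have "x \<in> perpB mu" using pw by simp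
    then have dmx: "dotp mu x = 0" using perpB_D by blast
    have "dotp u y = (\<Sum>t<k. mu!(tt t) * \<epsilon> (tt t) * y!t)" unfolding dotp_def u_def by simp
    also have "\<dots> = (\<Sum>i<k. mu!(tt (\<sigma> i)) * \<epsilon> (tt (\<sigma> i)) * y!(\<sigma> i))"
      using sum.permute[OF V(2), of "\<lambda>t. mu!(tt t) * \<epsilon> (tt t) * y!t"] by (simp add: comp_def)
    also have "\<dots> = (\<Sum>i<k. mu!i * (\<epsilon> i * y!(\<sigma> i)))" unfolding ts by (simp add: mult.assoc)
    also have "\<dots> = dotp mu x" unfolding dotp_def x_def lmu by simp
    finally show "dotp u y = 0" using dmx by simp
  qed
  have pr: "\<forall>i<k. \<forall>j<k. u!i * la!j = u!j * la!i" using G[OF lu[unfolded k_def] uort] k_def by simp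
  have k0: "k > 0" using part_len[OF P] k_def by simp
  have la0: "la!0 \<ge> 1" using part_pos[OF P, of 0] k0 k_def by simp
  have absu: "\<And>t. t < k \<Longrightarrow> abs (u!t) = mu!(tt t)"
  proof -
    fix t assume t: "t < k"
    have "mu!(tt t) \<ge> 1" using part_pos[OF Pm] tk[OF t] lmu by simp
    moreover have "\<epsilon> (tt t) \<in> {-1,1}" using eps[OF tk[OF t]] .
    ultimately show "abs (u!t) = mu!(tt t)" unfolding u_def using t by (auto simp: abs_mult)
  qed
  have key: "\<forall>t<k. la!0 * mu!(tt t) = mu!(tt 0) * la!t"
  proof (intro allI impI)
    fix t assume t: "t < k"
    have "u!t * la!0 = u!0 * la!t" using pr t k0 by simp
    then have "abs (u!t) * abs (la!0) = abs (u!0) * abs (la!t)" by (metis abs_mult)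
    moreover have "abs (la!0) = la!0" "abs (la!t) = la!t" using la0 part_pos[OF P, of t] t k_def by auto
    ultimately show "la!0 * mu!(tt t) = mu!(tt 0) * la!t" using absu[OF t] absu[OF k0] by (simp add: mult.commute)
  qed
  define c where "c = mu!(tt 0)"
  have c1: "c \<ge> 1" unfolding c_def using part_pos[OF Pm] tk[OF k0] lmu by simp
  have Ps: "sorted_wrt (\<ge>) la" "sorted_wrt (\<ge>) mu" using P Pm unfolding is_partition_def by auto
  have sc: "\<forall>t<k. la!0 * mu!t = c * la!t"
    using sorted_scale[OF Ps, of tt "la!0" c] lmu tp la0 c1 key unfolding k_def c_def by simp
  have "la!0 dvd Gcd ((*) c ` set la)"
  proof (rule Gcd_greatest)
    fix b assume "b \<in> (*) c ` set la"
    then obtain t where t: "t < k" "b = c * la!t" unfolding k_def by (auto simp: in_set_conv_nth)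
    then show "la!0 dvd b" using sc by (metis dvd_triv_left)
  qed
  then have "la!0 dvd c" using g1 c1 by (simp add: Gcd_mult)
  then obtain d where d: "c = la!0 * d" by blast
  have d1: "d \<ge> 1" using d c1 la0 by (metis int_one_le_iff_zero_less zero_less_mult_pos)
  have mud: "\<forall>t<k. mu!t = d * la!t"
  proof (intro allI impI)
    fix t assume t: "t < k"
    have "la!0 * mu!t = la!0 * (d * la!t)" using sc t d by (simp add: mult.assoc)
    then show "mu!t = d * la!t" using la0 by simp
  qed
  show ?thesis
  proof (cases "d = 1")
    case True
    then have "mu = la" using mud lmu k_def by (intro nth_equalityI) auto
    then show ?thesis unfolding lex_le_def by simp
  next
    case False
    then have "d \<ge> 2" using d1 by simp
    then have "la!0 < mu!0" using mud k0 la0 by (simp add: mult_less_cancel_right1)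
    then show ?thesis unfolding lex_le_def using k0 lmu k_def by (intro disjI2 exI[of _ 0]) auto
  qed
qed

lemma good_novel:
  assumes P: "is_partition la" and ne: "perpB la \<noteq> {}"
    and G: "\<And>u. length u = length la \<Longrightarrow> (\<forall>x\<in>perpB la. dotp u x = 0) \<Longrightarrow>
               (\<forall>i<length la. \<forall>j<length la. u!i * la!j = u!j * la!i)"
    and g1: "Gcd (set la) = 1"
  shows "novel la"
  unfolding novel_def using ne no_strict_reduce[OF P G] lex_min[OF P G g1] by blast



context vec_space begin

lemma orth_span:
  assumes z: "z \<in> carrier_vec n" and S: "S \<subseteq> carrier_vec n" and o: "\<forall>s\<in>S. s \<bullet> z = 0"
    and v: "v \<in> span S"
  shows "v \<bullet> z = 0"
proof -
  let ?N = "{x \<in> carrier_vec n. x \<bullet> z = 0}"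
  have sm: "LinearCombinations.submodule class_ring ?N V"
    unfolding LinearCombinations.submodule_def
  proof (intro conjI allI impI)
    show "module class_ring V" by unfold_locales
    show "?N \<subseteq> carrier V" by auto
    fix a b assume "a \<in> ?N" "b \<in> ?N"
    then show "a \<oplus>\<^bsub>V\<^esub> b \<in> ?N" using z by (auto simp: add_scalar_prod_distrib[of _ n])
  next
    show "\<zero>\<^bsub>V\<^esub> \<in> ?N" using z by simp
  next
    fix c :: 'a and x assume "c \<in> carrier class_ring" "x \<in> ?N"
    then show "c \<odot>\<^bsub>V\<^esub> x \<in> ?N" using z by auto
  qed
  have "S \<subseteq> ?N" using S o by auto
  from span_is_subset[OF this sm] v show ?thesis by auto
qed

lemma det_dep:
  assumes T: "set T \<subseteq> carrier_vec n" "length T = n" "distinct T"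
    and z: "z \<in> carrier_vec n" "z \<noteq> 0\<^sub>v n" and o: "\<forall>t\<in>set T. t \<bullet> z = 0"
  shows "lin_dep (set T)"
proof -
  let ?N = "mat_of_cols n T"
  have N: "?N \<in> carrier_mat n n" using mat_of_cols_carrier(1)[of n T] T(2) by simp
  have NT: "transpose_mat ?N \<in> carrier_mat n n" using N by simp
  have "transpose_mat ?N *\<^sub>v z = 0\<^sub>v n"
  proof (rule eq_vecI)
    fix i assume "i < dim_vec (0\<^sub>v n :: 'a vec)"
    then have i: "i < n" by simp
    have Ti: "T!i \<in> set T" using i T(2) by simp
    then have "T!i \<bullet> z = 0" using o by blast
    moreover have "col ?N i = T!i" using col_mat_of_cols[of i T n] i T(2) Ti T(1) by blast
    moreover have dc: "dim_col ?N = n" "dim_row ?N = n" using T(2) by auto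
    moreover have "(transpose_mat ?N *\<^sub>v z) $ i = row (transpose_mat ?N) i \<bullet> z"
      using i dc by simp
    moreover have "row (transpose_mat ?N) i = col ?N i" using i dc by simp
    ultimately show "(transpose_mat ?N *\<^sub>v z) $ i = (0\<^sub>v n :: 'a vec) $ i"
      using i by simp
  qed (use T(2) in simp)
  then have "det (transpose_mat ?N) = 0" using det_0_iff_vec_prod_zero[OF NT] z by blast
  then have "det ?N = 0" using det_transpose[OF N] by simp
  then obtain v where v: "v \<in> carrier_vec n" "v \<noteq> 0\<^sub>v n" "?N *\<^sub>v v = 0\<^sub>v n"
    using det_0_iff_vec_prod_zero[OF N] by blast
  have cN: "cols ?N = T" using cols_mat_of_cols[OF T(1)] .
  have "lin_dep (set (cols ?N))" by (rule lin_depI[OF N v]) (use cN T(3) in simp)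
  then show ?thesis using cN by simp
qed

lemma max_span:
  assumes C: "C \<subseteq> carrier_vec n" and M: "maximal S (\<lambda>T. T \<subseteq> C \<and> lin_indpt T)"
    and c: "c \<in> C"
  shows "c \<in> span S"
proof (cases "c \<in> S")
  case True
  have "S \<subseteq> carrier_vec n" using M C unfolding maximal_def by auto
  then show ?thesis using in_own_span True by auto
next
  case False
  have S: "S \<subseteq> C" "lin_indpt S" using M unfolding maximal_def by auto
  then have Sc: "S \<subseteq> carrier_vec n" using C by auto
  have cc: "c \<in> carrier_vec n" using c C by auto
  show ?thesis
  proof (rule ccontr)
    assume "c \<notin> span S"
    then have "lin_indpt (S \<union> {c})" using lin_dep_iff_in_span[OF Sc S(2) cc False] by simp
    moreover have "S \<union> {c} \<subseteq> C" using S c by auto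
    ultimately have "S \<union> {c} = S" using M unfolding maximal_def by blast
    then show False using False by auto
  qed
qed

end



definition Rv :: "nat \<Rightarrow> int list \<Rightarrow> real vec" where
  "Rv k c = vec k (\<lambda>i. real_of_int (c!i))"

lemma Rv_carrier[simp]: "Rv k c \<in> carrier_vec k" unfolding Rv_def by simp

lemma Rv_dot: "length a = k \<Longrightarrow> Rv k a \<bullet> Rv k b = real_of_int (dotp a b)"
  unfolding Rv_def scalar_prod_def dotp_def by (simp add: atLeast0LessThan)

lemma Rv_inj: "length a = k \<Longrightarrow> length b = k \<Longrightarrow> Rv k a = Rv k b \<Longrightarrow> a = b"
proof -
  assume a: "length a = k" and b: "length b = k" and e: "Rv k a = Rv k b"
  show "a = b"
  proof (rule nth_equalityI)
    show "length a = length b" using a b by simp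
    fix i assume "i < length a"
    then have "Rv k a $ i = Rv k b $ i" using e by simp
    then show "a!i = b!i" using \<open>i < length a\<close> a unfolding Rv_def by simp
  qed
qed

lemma Rv_zero: "Rv k a = 0\<^sub>v k \<Longrightarrow> i < k \<Longrightarrow> a!i = 0"
proof -
  assume "Rv k a = 0\<^sub>v k" "i < k"
  then have "Rv k a $ i = 0" by simp
  then show "a!i = 0" using \<open>i < k\<close> unfolding Rv_def by simp
qed

lemma dotp_comm: "length a = length b \<Longrightarrow> dotp a b = dotp b a"
  unfolding dotp_def by (simp add: mult.commute)

lemma Acols_finite: "finite (Acols l)"
proof -
  have "Acols l \<subseteq> {x. set x \<subseteq> {-1,1} \<and> length x = length l}"
    unfolding Acols_def perpB_def by auto
  moreover have "finite {x. set x \<subseteq> {-1::int,1} \<and> length x = length l}"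
    by (rule finite_lists_length_eq) simp
  ultimately show ?thesis using finite_subset by blast
qed

lemma Amat_carrier: "Amat l \<in> carrier_mat (length l) (dim_col (Amat l))"
  unfolding Amat_def Let_def by simp

lemma Amat_cols: "set (cols (Amat l)) = Rv (length l) ` Acols l"
proof -
  let ?P = "\<lambda>cs. distinct cs \<and> set cs = Acols l"
  define cs where "cs = (SOME cs. ?P cs)"
  have "\<exists>cs. ?P cs" using finite_distinct_list[OF Acols_finite] by blast
  then have cs: "?P cs" unfolding cs_def by (rule someI_ex)
  have A: "Amat l = mat (length l) (length cs) (\<lambda>(i, j). real_of_int (cs ! j ! i))"
    unfolding Amat_def Let_def cs_def by simp
  have "cols (Amat l) = map (Rv (length l)) cs"
  proof (rule nth_equalityI)
    show "length (cols (Amat l)) = length (map (Rv (length l)) cs)" unfolding A by simp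
    fix j assume "j < length (cols (Amat l))"
    then have j: "j < length cs" unfolding A by simp
    show "cols (Amat l) ! j = map (Rv (length l)) cs ! j"
      unfolding A using j by (auto simp: col_def Rv_def intro!: eq_vecI)
  qed
  then show ?thesis using cs by simp
qed

lemma dotp_self_pos: "is_partition la \<Longrightarrow> dotp la la > 0"
proof -
  assume P: "is_partition la"
  have "dotp la la = (\<Sum>i<length la. la!i * la!i)" unfolding dotp_def by simp
  also have "\<dots> \<ge> la!0 * la!0"
    by (rule member_le_sum[of 0 "{..<length la}" "\<lambda>i. la!i * la!i"]) (use part_len[OF P] in auto)
  finally show ?thesis using part_pos[OF P, of 0] part_len[OF P] by (smt (verit) mult_pos_pos)
qed

lemma prop_zero:
  assumes P: "is_partition la" and l: "length u = length la" and d: "dotp u la = 0"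
    and pr: "\<forall>i<length la. \<forall>j<length la. u!i * la!j = u!j * la!i"
  shows "\<forall>j<length la. u!j = 0"
proof (intro allI impI)
  fix j assume j: "j < length la"
  have "la!j * dotp u la = (\<Sum>i<length la. u!i * la!j * la!i)"
    unfolding dotp_def l by (simp add: sum_distrib_left algebra_simps)
  also have "\<dots> = (\<Sum>i<length la. u!j * (la!i * la!i))" using pr j by (intro sum.cong) (auto simp: algebra_simps)
  also have "\<dots> = u!j * dotp la la" unfolding dotp_def by (simp add: sum_distrib_left)
  finally have "u!j * dotp la la = 0" using d by simp
  then show "u!j = 0" using dotp_self_pos[OF P] by simp
qed



lemma rank_iff:
  assumes P: "is_partition la" and ne: "perpB la \<noteq> {}"
  shows "vec_space.rank (length la) (Amat la) = length la - 1 \<longleftrightarrow> (\<forall>u. \<not> bad la u)"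
proof -
  define k where "k = length la"
  interpret V: vec_space "TYPE(real)" k .
  define A where "A = Amat la"
  define Cs where "Cs = set (cols A)"
  have Cs: "Cs = Rv k ` Acols la" unfolding Cs_def A_def k_def by (rule Amat_cols)
  have Csc: "Cs \<subseteq> carrier_vec k" unfolding Cs by auto
  have finCs: "finite Cs" unfolding Cs_def by simp
  have k0: "k > 0" using part_len[OF P] k_def by simp
  have li0: "V.lin_indpt {}" unfolding V.lin_dep_def by auto
  obtain S where finS: "finite S" and M: "maximal S (\<lambda>T. T \<subseteq> Cs \<and> V.lin_indpt T)"
    using maximal_exists[of "\<lambda>T. T \<subseteq> Cs \<and> V.lin_indpt T" "card Cs" "{}"] li0 finCs
    by (meson card_mono empty_subsetI finite_subset)
  have SC: "S \<subseteq> Cs" and Sli: "V.lin_indpt S" using M unfolding maximal_def by auto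
  have Sc: "S \<subseteq> carrier_vec k" using SC Csc by auto
  have rk: "V.rank A = card S" unfolding A_def
    by (rule V.rank_card_indpt[OF Amat_carrier[of la, folded k_def]]) (use M Cs_def A_def in simp)
  define L where "L = Rv k la"
  have lak: "length la = k" unfolding k_def ..
  have LL: "L \<bullet> L > 0" unfolding L_def using Rv_dot[OF lak] dotp_self_pos[OF P] by simp
  have Lnz: "L \<noteq> 0\<^sub>v k" using LL by auto
  have Lc: "L \<in> carrier_vec k" unfolding L_def by simp
  have CsD: "\<And>s. s \<in> Cs \<Longrightarrow> \<exists>c. c \<in> perpB la \<and> c!0 = 1 \<and> s = Rv k c"
    unfolding Cs Acols_def by auto
  have orthL: "\<forall>s\<in>S. s \<bullet> L = 0"
  proof
    fix s assume "s \<in> S"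
    then obtain c where c: "c \<in> perpB la" "s = Rv k c" using CsD SC by blast
    have lc: "length c = k" using perpB_D[OF c(1)] lak by simp
    have "s \<bullet> L = real_of_int (dotp c la)" unfolding c(2) L_def using Rv_dot[OF lc] by simp
    also have "dotp c la = dotp la c" using dotp_comm[of c la] lc lak by simp
    also have "\<dots> = 0" using perpB_D[OF c(1)] by simp
    finally show "s \<bullet> L = 0" by simp
  qed
  have upper: "card S \<le> k - 1"
  proof (rule ccontr)
    assume "\<not> card S \<le> k - 1"
    then have "k \<le> card S" by simp
    then obtain S' where S': "S' \<subseteq> S" "card S' = k" "finite S'" by (rule obtain_subset_with_card_n)
    obtain T where T: "set T = S'" "distinct T" using finite_distinct_list[OF S'(3)] by blast
    have "V.lin_dep (set T)"
    proof (rule V.det_dep[OF _ _ T(2) Lc Lnz])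
      show "set T \<subseteq> carrier_vec k" using T(1) S'(1) Sc by auto
      show "length T = k" using distinct_card[OF T(2)] T(1) S'(2) by simp
      show "\<forall>t\<in>set T. t \<bullet> L = 0" using orthL T(1) S'(1) by auto
    qed
    moreover have "V.lin_indpt S'" using V.subset_li_is_li[OF Sli S'(1)] .
    ultimately show False using T(1) by simp
  qed
  show ?thesis
  proof
    assume "vec_space.rank (length la) (Amat la) = length la - 1"
    then have cS: "card S = k - 1" using rk unfolding A_def k_def by simp
    show "\<forall>u. \<not> bad la u"
    proof (intro allI notI)
      fix u assume B: "bad la u"
      have lu: "length u = k" and ort: "\<forall>x\<in>perpB la. dotp u x = 0" using B unfolding bad_def k_def by auto
      obtain i j where ij: "i < k" "j < k" "u!i * la!j \<noteq> u!j * la!i" using B unfolding bad_def k_def by auto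
      define a where "a = dotp la la"
      define b where "b = dotp u la"
      define w where "w = map (\<lambda>t. a * u!t - b * la!t) [0..<length la]"
      have lw: "length w = k" unfolding w_def k_def by simp
      have dw: "\<And>x. dotp w x = a * dotp u x - b * dotp la x"
        unfolding w_def using dotp_lincomb[of u la a b] lu lak by simp
      have wort: "\<And>x. x \<in> perpB la \<Longrightarrow> dotp w x = 0" using dw ort perpB_D by simp
      have wla: "dotp w la = 0" unfolding dw a_def b_def by simp
      have W: "Rv k w \<noteq> 0\<^sub>v k"
      proof
        assume "Rv k w = 0\<^sub>v k"
        then have wz: "\<And>t. t < k \<Longrightarrow> a * u!t = b * la!t"
          using Rv_zero unfolding w_def k_def by fastforce
        have "a * (u!i * la!j) = a * (u!j * la!i)"
          using wz[OF ij(1)] wz[OF ij(2)] by (metis mult.assoc mult.commute)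
        then show False using ij(3) dotp_self_pos[OF P] unfolding a_def by simp
      qed
      obtain Sl where Sl: "set Sl = S" "distinct Sl" using finite_distinct_list[OF finS] by blast
      have LnS: "L \<notin> S" using orthL LL by auto
      have "V.lin_dep (set (Sl @ [L]))"
      proof (rule V.det_dep)
        show "set (Sl @ [L]) \<subseteq> carrier_vec k" using Sl(1) Sc Lc by auto
        show "length (Sl @ [L]) = k" using distinct_card[OF Sl(2)] Sl(1) cS k0 by simp
        show "distinct (Sl @ [L])" using Sl LnS by simp
        show "Rv k w \<in> carrier_vec k" by simp
        show "Rv k w \<noteq> 0\<^sub>v k" by (rule W)
        show "\<forall>t\<in>set (Sl @ [L]). t \<bullet> Rv k w = 0"
        proof
          fix t assume "t \<in> set (Sl @ [L])"
          then have "t \<in> S \<or> t = L" using Sl(1) by auto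
          then show "t \<bullet> Rv k w = 0"
          proof
            assume "t \<in> S"
            then obtain c where c: "c \<in> perpB la" "t = Rv k c" using CsD SC by blast
            have lc: "length c = k" using perpB_D[OF c(1)] lak by simp
            have "dotp c w = dotp w c" using dotp_comm[of c w] lc lw by simp
            then show ?thesis using Rv_dot[OF lc] wort[OF c(1)] c(2) by simp
          next
            assume "t = L"
            have "dotp la w = dotp w la" using dotp_comm[of la w] lw lak by simp
            then show ?thesis using Rv_dot[OF lak] wla \<open>t = L\<close> L_def by simp
          qed
        qed
      qed
      then have "V.lin_dep (S \<union> {L})" using Sl(1) by simp
      then have "L \<in> V.span S" using V.lin_dep_iff_in_span[OF Sc Sli Lc LnS] by simp
      then have "L \<bullet> L = 0" using V.orth_span[OF Lc Sc orthL] by simp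
      then show False using LL by simp
    qed
  next
    assume G: "\<forall>u. \<not> bad la u"
    have "card S = k - 1"
    proof (rule ccontr)
      assume "card S \<noteq> k - 1"
      then have lt: "card S < k - 1" using upper by simp
      define C where "C = {c \<in> Acols la. Rv k c \<in> S}"
      have finC: "finite C" unfolding C_def using Acols_finite by simp
      have CS: "Rv k ` C = S" unfolding C_def Cs using SC Cs by auto
      have Cl: "\<And>c. c \<in> C \<Longrightarrow> length c = k \<and> dotp la c = 0"
        unfolding C_def Acols_def perpB_def k_def by auto
      have injC: "inj_on (Rv k) C"
      proof (rule inj_onI)
        fix a b assume "a \<in> C" "b \<in> C" "Rv k a = Rv k b"
        then show "a = b" using Rv_inj[of a k b] Cl by simp
      qed
      obtain cl where cl: "set cl = C" "distinct cl" using finite_distinct_list[OF finC] by blast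
      have lcl: "length cl = card S" using distinct_card[OF cl(2)] cl(1) CS card_image[OF injC] by simp
      define Q where "Q = mat k k (\<lambda>(i,j). if i < length cl then cl!i!j else if i = length cl then la!j else (0::int))"
      have Qc: "Q \<in> carrier_mat k k" unfolding Q_def by simp
      have QTc: "transpose_mat Q \<in> carrier_mat k k" using Qc by simp
      have "transpose_mat Q *\<^sub>v unit_vec k (k-1) = 0\<^sub>v k"
      proof (rule eq_vecI)
        fix j assume "j < dim_vec (0\<^sub>v k :: int vec)"
        then have j: "j < k" by simp
        have "(transpose_mat Q *\<^sub>v unit_vec k (k-1)) $ j = row (transpose_mat Q) j \<bullet> unit_vec k (k-1)"
          using j Qc by simp
        also have "\<dots> = row (transpose_mat Q) j $ (k-1)"
          using j Qc k0 by (simp add: scalar_prod_right_unit)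
        also have "\<dots> = Q $$ (k-1, j)" using j Qc k0 by simp
        also have "\<dots> = 0" unfolding Q_def using j lt lcl k0 by simp
        finally show "(transpose_mat Q *\<^sub>v unit_vec k (k-1)) $ j = (0\<^sub>v k :: int vec) $ j" using j by simp
      qed (use Qc in simp)
      moreover have "unit_vec k (k-1) \<noteq> (0\<^sub>v k :: int vec)"
      proof
        assume "unit_vec k (k-1) = (0\<^sub>v k :: int vec)"
        then have "unit_vec k (k-1) $ (k-1) = (0\<^sub>v k :: int vec) $ (k-1)" by simp
        then show False using k0 by simp
      qed
      ultimately have "det (transpose_mat Q) = 0" using det_0_iff_vec_prod_zero[OF QTc] by force
      then have "det Q = 0" using det_transpose[OF Qc] by simp
      then obtain uv where uv: "uv \<in> carrier_vec k" "uv \<noteq> 0\<^sub>v k" "Q *\<^sub>v uv = 0\<^sub>v k"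
        using det_0_iff_vec_prod_zero[OF Qc] by blast
      define ul where "ul = list_of_vec uv"
      have lul: "length ul = k" unfolding ul_def using uv(1) by simp
      have Qrow: "\<And>i. i < k \<Longrightarrow> (\<Sum>j<k. Q $$ (i,j) * ul!j) = 0"
      proof -
        fix i assume i: "i < k"
        have "(Q *\<^sub>v uv) $ i = 0" using uv(3) i by simp
        moreover have "(Q *\<^sub>v uv) $ i = (\<Sum>j<k. Q $$ (i,j) * ul!j)"
          using i Qc uv(1) unfolding ul_def
          by (simp add: scalar_prod_def row_def list_of_vec_index atLeast0LessThan)
        ultimately show "(\<Sum>j<k. Q $$ (i,j) * ul!j) = 0" by simp
      qed
      have clort: "\<And>c. c \<in> C \<Longrightarrow> dotp c ul = 0"
      proof -
        fix c assume "c \<in> C"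
        then obtain i where i: "i < length cl" "c = cl!i" using cl(1) by (auto simp: in_set_conv_nth)
        have ik: "i < k" using i(1) lt lcl by simp
        have "(\<Sum>j<k. Q $$ (i,j) * ul!j) = (\<Sum>j<k. c!j * ul!j)"
          unfolding Q_def using i ik by simp
        then show "dotp c ul = 0" using Qrow[OF ik] Cl \<open>c \<in> C\<close> unfolding dotp_def by simp
      qed
      have laort: "dotp la ul = 0"
      proof -
        have ik: "length cl < k" using lt lcl by simp
        have "(\<Sum>j<k. Q $$ (length cl,j) * ul!j) = (\<Sum>j<k. la!j * ul!j)"
          unfolding Q_def using ik by simp
        then show ?thesis using Qrow[OF ik] unfolding dotp_def lak by simp
      qed
      have orthU: "\<forall>s\<in>S. s \<bullet> Rv k ul = 0"
      proof
        fix s assume "s \<in> S"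
        then obtain c where c: "c \<in> C" "s = Rv k c" using CS by auto
        then show "s \<bullet> Rv k ul = 0" using Rv_dot Cl clort by simp
      qed
      have uort: "\<forall>x\<in>perpB la. dotp ul x = 0"
      proof
        fix x assume x: "x \<in> perpB la"
        have lx: "length x = k" and sx: "set x \<subseteq> {-1,1}" and dx: "dotp la x = 0"
          using perpB_D[OF x] lak by auto
        have ac: "\<And>y. y \<in> Acols la \<Longrightarrow> dotp ul y = 0"
        proof -
          fix y assume y: "y \<in> Acols la"
          have ly: "length y = k" using y unfolding Acols_def perpB_def k_def by simp
          have "Rv k y \<in> Cs" unfolding Cs using y by simp
          then have "Rv k y \<in> V.span S" using V.max_span[OF Csc M] by simp
          then have "Rv k y \<bullet> Rv k ul = 0" using V.orth_span[OF _ Sc orthU] by simp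
          then have "dotp y ul = 0" using Rv_dot[OF ly] by simp
          then show "dotp ul y = 0" using dotp_comm[of y ul] ly lul by simp
        qed
        have "x!0 \<in> set x" using lx k0 by simp
        then have "x!0 \<in> {-1,1}" using sx by blast
        then show "dotp ul x = 0"
        proof
          assume "x!0 = -1"
          define x' where "x' = map uminus x"
          have "x' \<in> Acols la"
          proof -
            have "dotp la x' = - dotp la x" unfolding x'_def dotp_def using lx lak
              by (simp add: sum_negf[symmetric])
            moreover have "set x' \<subseteq> {-1,1}" unfolding x'_def using sx by auto
            ultimately show ?thesis unfolding Acols_def perpB_def x'_def
              using lx lak dx \<open>x!0 = -1\<close> k0 by simp
          qed
          then have "dotp ul x' = 0" by (rule ac)
          moreover have "dotp ul x' = - dotp ul x" unfolding x'_def dotp_def using lx lul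
            by (simp add: sum_negf[symmetric])
          ultimately show "dotp ul x = 0" by simp
        next
          assume "x!0 \<in> {1}"
          then have "x \<in> Acols la" unfolding Acols_def using x by simp
          then show "dotp ul x = 0" by (rule ac)
        qed
      qed
      have "\<not> bad la ul" using G by simp
      then have pr: "\<forall>i<k. \<forall>j<k. ul!i * la!j = ul!j * la!i"
        using lul uort lak unfolding bad_def by simp
      have "dotp ul la = 0" using laort dotp_comm[of ul la] lul lak by simp
      then have z: "\<forall>j<length la. ul!j = 0" by (intro prop_zero[OF P]) (use lul lak pr in auto)
      have "uv = 0\<^sub>v k"
      proof (rule eq_vecI)
        fix i assume "i < dim_vec (0\<^sub>v k :: int vec)"
        then have i: "i < k" by simp
        have "uv $ i = ul ! i" unfolding ul_def by (simp add: list_of_vec_index)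
        then show "uv $ i = (0\<^sub>v k :: int vec) $ i" using z i lak by simp
      qed (use uv(1) in simp)
      then show False using uv(2) by simp
    qed
    moreover have "vec_space.rank (length la) (Amat la) = card S" using rk unfolding A_def k_def .
    ultimately show "vec_space.rank (length la) (Amat la) = length la - 1" using lak by simp
  qed
qed


theorem mainTheorem3:
  fixes la :: "int list"
  assumes "is_partition la"
    and "perpB la \<noteq> {}"
  shows "novel la \<longleftrightarrow>
           vec_space.rank (length la) (Amat la) = length la - 1 \<and> Gcd (set la) = 1"
proof -
  have L: "vec_space.rank (length la) (Amat la) = length la - 1 \<longleftrightarrow> (\<forall>u. \<not> bad la u)"
    by (rule rank_iff[OF assms])
  have C: "novel la \<longleftrightarrow> (\<forall>u. \<not> bad la u) \<and> Gcd (set la) = 1"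
  proof
    assume N: "novel la"
    have "\<forall>u. \<not> bad la u" using bad_not_novel[OF assms(1)] N by blast
    moreover have "Gcd (set la) = 1" by (rule gcd_part[OF assms(1) N])
    ultimately show "(\<forall>u. \<not> bad la u) \<and> Gcd (set la) = 1" by simp
  next
    assume H: "(\<forall>u. \<not> bad la u) \<and> Gcd (set la) = 1"
    show "novel la"
    proof (rule good_novel[OF assms])
      fix u assume lu: "length u = length la" and o: "\<forall>x\<in>perpB la. dotp u x = 0"
      have "\<not> bad la u" using H by simp
      then show "\<forall>i<length la. \<forall>j<length la. u!i * la!j = u!j * la!i"
        using lu o unfolding bad_def by simp
    next
      show "Gcd (set la) = 1" using H by simp
    qed
  qed
  show ?thesis using L C by blast
qed

end
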